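(* Let $d\ge1$, let $Z$ be a simple $d$-cycle and $D\subseteq\mathrm{Supp}(Z)$. Suppose that deleting the vertices corresponding to $D$ from $G_d(Z)$ leaves a graph with $m>1$ connected components. Then there exist $(d-1)$-cycles $C_1,\dots,C_m$ supported on $K(D)$ such that (a) any two of them have disjoint supports; and (b) any $m-1$ of them are linearly independent modulo the space $\mathcal B_{d-1}(K(D))$ of $(d-1)$-boundaries of $K(D)$, while all $m$ of them are linearly dependent modulo $\mathcal B_{d-1}(K(D))$.
   Context: Fix a field $\mathbb F$. A $d$-simplex is a $(d+1)$-element subset of $[n]$ oriented by increasing order $s_1<\dots<s_{d+1}$. A $d$-chain is a formal $\mathbb F$-combination of $d$-simplices; its support is the set of simplices with nonzero coefficient, and it is supported on a complex $K$ if its support lies in $K$. $\partial\sigma=\sum_i(-1)^{i-1}(\sigma\setminus\{s_i\})$, extended linearly. A $d$-cycle is a chain with $\partial Z=0$; it is simple if $Z\ne0$ and every $d$-cycle supported in $\mathrm{Supp}(Z)$ is a scalar multiple of $Z$. For a set $S$ of simplices, $K(S)$ is the complex of all subsets of members of $S$. $\mathcal B_{d-1}(K)=\{\partial B: B \text{ a } d\text{-chain supported on } K\}$. The facet graph $G_d(Z)$ has vertex set $\mathrm{Supp}(Z)$, two $d$-simplices adjacent iff they share a $(d-1)$-face. *)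

theory Defs
  imports Main
begin

text \<open>Vertices are 1..n. A k-element subset of {1..n} is a (k-1)-simplex.
 Chains are functions from vertex sets to the field, vanishing off simplices.\<close>

definition supp :: "(nat set \<Rightarrow> 'f::zero) \<Rightarrow> nat set set" where
  "supp c = {\<sigma>. c \<sigma> \<noteq> 0}"

definition is_chain :: "nat \<Rightarrow> nat \<Rightarrow> (nat set \<Rightarrow> 'f::zero) \<Rightarrow> bool" where
  "is_chain n k c \<longleftrightarrow> (\<forall>\<sigma>. c \<sigma> \<noteq> 0 \<longrightarrow> \<sigma> \<subseteq> {1..n} \<and> card \<sigma> = k)"

text \<open>Boundary of a chain on k-vertex simplices: removing the i-th smallest vertex v
 of sigma gets sign (-1)^(i-1) = (-1)^(number of vertices of tau below v).\<close>
definition bd :: "nat \<Rightarrow> nat \<Rightarrow> (nat set \<Rightarrow> 'f::field) \<Rightarrow> nat set \<Rightarrow> 'f" where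
  "bd n k c \<tau> = (if \<tau> \<subseteq> {1..n} \<and> card \<tau> + 1 = k
      then (\<Sum>v\<in>{1..n} - \<tau>. (-1) ^ card {x\<in>\<tau>. x < v} * c (insert v \<tau>))
      else 0)"

definition is_cycle :: "nat \<Rightarrow> nat \<Rightarrow> (nat set \<Rightarrow> 'f::field) \<Rightarrow> bool" where
  "is_cycle n k c \<longleftrightarrow> is_chain n k c \<and> bd n k c = (\<lambda>_. 0)"

definition simple_cycle :: "nat \<Rightarrow> nat \<Rightarrow> (nat set \<Rightarrow> 'f::field) \<Rightarrow> bool" where
  "simple_cycle n k Z \<longleftrightarrow> is_cycle n k Z \<and> Z \<noteq> (\<lambda>_. 0) \<and>
     (\<forall>W. is_cycle n k W \<and> supp W \<subseteq> supp Z \<longrightarrow> (\<exists>a. W = (\<lambda>\<sigma>. a * Z \<sigma>)))"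

definition cplx :: "nat set set \<Rightarrow> nat set set" where
  "cplx S = {\<tau>. \<exists>\<sigma>\<in>S. \<tau> \<subseteq> \<sigma>}"

definition boundaries :: "nat \<Rightarrow> nat \<Rightarrow> nat set set \<Rightarrow> (nat set \<Rightarrow> 'f::field) set" where
  "boundaries n k K = {bd n k B | B. is_chain n k B \<and> supp B \<subseteq> K}"

definition facet_adj :: "nat \<Rightarrow> nat set \<Rightarrow> nat set \<Rightarrow> bool" where
  "facet_adj d \<sigma> \<tau> \<longleftrightarrow> \<sigma> \<noteq> \<tau> \<and> card (\<sigma> \<inter> \<tau>) = d"

definition components :: "'a set \<Rightarrow> ('a \<Rightarrow> 'a \<Rightarrow> bool) \<Rightarrow> 'a set set" where
  "components V E = (\<lambda>x. {y\<in>V. (x, y) \<in> {(a, b). a \<in> V \<and> b \<in> V \<and> E a b}\<^sup>*}) ` V"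

end

theory Submission
  imports Defs
begin



lemma antisym_double_sum:
  fixes F :: "nat \<Rightarrow> nat \<Rightarrow> 'f::field"
  assumes "finite A" "\<And>v w. v\<in>A \<Longrightarrow> w\<in>A \<Longrightarrow> v\<noteq>w \<Longrightarrow> F w v = - F v w"
  shows "(\<Sum>v\<in>A. \<Sum>w\<in>A-{v}. F v w) = 0"
  using assms
proof (induction A rule: finite_induct)
  case empty thus ?case by simp
next
  case (insert x A)
  have IH: "(\<Sum>v\<in>A. \<Sum>w\<in>A-{v}. F v w) = 0" by (rule insert.IH) (rule insert.prems, auto)
  have e1: "insert x A - {x} = A" using insert(2) by auto
  have e2: "(\<Sum>w\<in>insert x A - {v}. F v w) = F v x + (\<Sum>w\<in>A-{v}. F v w)" if "v\<in>A" for v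
  proof -
    have "insert x A - {v} = insert x (A - {v})" using insert(2) that by auto
    moreover have "x \<notin> A - {v}" using insert(2) by auto
    ultimately show ?thesis using insert(1) by simp
  qed
  have "(\<Sum>v\<in>insert x A. \<Sum>w\<in>insert x A-{v}. F v w)
      = (\<Sum>w\<in>A. F x w) + (\<Sum>v\<in>A. F v x + (\<Sum>w\<in>A-{v}. F v w))"
    by (simp only: sum.insert[OF insert(1,2)] e1 sum.cong[OF refl e2])
  also have "\<dots> = (\<Sum>w\<in>A. F x w) + (\<Sum>v\<in>A. F v x)" using IH by (simp add: sum.distrib)
  also have "(\<Sum>v\<in>A. F v x) = (\<Sum>v\<in>A. - F x v)"
    using insert.prems insert(2) by (intro sum.cong) auto
  finally show ?case by (simp add: sum_negf)
qed

lemma card_less_insert: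
  assumes "finite \<rho>" "v \<notin> \<rho>"
  shows "card {x\<in>insert v \<rho>. x < w} = card {x\<in>\<rho>. x<w} + (if v < w then 1 else 0)"
proof (cases "v < w")
  case True
  then have "{x\<in>insert v \<rho>. x < w} = insert v {x\<in>\<rho>. x<w}" by auto
  then show ?thesis using assms True by simp
next
  case False
  then have "{x\<in>insert v \<rho>. x < w} = {x\<in>\<rho>. x<w}" by auto
  then show ?thesis using False by simp
qed

lemma bd_zero: "\<not> (\<tau> \<subseteq> {1..n} \<and> card \<tau> + 1 = k) \<Longrightarrow> bd n k c \<tau> = 0"
  by (unfold bd_def) (rule if_not_P)

lemma bd_eq: "\<tau> \<subseteq> {1..n} \<and> card \<tau> + 1 = k \<Longrightarrow>
   bd n k c \<tau> = (\<Sum>v\<in>{1..n} - \<tau>. (-1) ^ card {x\<in>\<tau>. x < v} * c (insert v \<tau>))"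
  by (unfold bd_def) (rule if_P)

lemma bd_dd: "bd n k (bd n (Suc k) (c :: nat set \<Rightarrow> 'f::field)) = (\<lambda>_. 0)"
proof (rule ext)
  fix \<rho>
  show "bd n k (bd n (Suc k) c) \<rho> = 0"
  proof (cases "\<rho> \<subseteq> {1..n} \<and> card \<rho> + 1 = k")
    case False thus ?thesis by (rule bd_zero)
  next
    case True
    define A where "A = {1..n} - \<rho>"
    define s where "s v = ((-1::'f)^card{x\<in>\<rho>. x<v})" for v
    define F where "F v w = s v * (s w * (if v < w then -1 else 1) * c (insert w (insert v \<rho>)))" for v w
    have fin: "finite \<rho>" using True finite_subset by blast
    have inner: "bd n (Suc k) c (insert v \<rho>) = (\<Sum>w\<in>A-{v}. s w * (if v<w then -1 else 1) * c (insert w (insert v \<rho>)))" if "v\<in>A" for v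
    proof -
      have vn: "v \<notin> \<rho>" using that by (auto simp: A_def)
      have "insert v \<rho> \<subseteq> {1..n} \<and> card (insert v \<rho>) + 1 = Suc k" using that True fin vn by (auto simp: A_def)
      moreover have "{1..n} - insert v \<rho> = A - {v}" by (auto simp: A_def)
      ultimately have "bd n (Suc k) c (insert v \<rho>) = (\<Sum>w\<in>A-{v}. (-1) ^ card {x\<in>insert v \<rho>. x < w} * c (insert w (insert v \<rho>)))"
        by (simp add: bd_eq)
      also have "\<dots> = (\<Sum>w\<in>A-{v}. s w * (if v<w then -1 else 1) * c (insert w (insert v \<rho>)))"
      proof (rule sum.cong[OF refl])
        fix w
        have "(-1::'f) ^ card {x\<in>insert v \<rho>. x < w} = s w * (if v<w then -1 else 1)"
          unfolding card_less_insert[OF fin vn] s_def power_add by simp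
        then show "(-1) ^ card {x\<in>insert v \<rho>. x < w} * c (insert w (insert v \<rho>)) = s w * (if v<w then -1 else 1) * c (insert w (insert v \<rho>))"
          by simp
      qed
      finally show ?thesis .
    qed
    have "bd n k (bd n (Suc k) c) \<rho> = (\<Sum>v\<in>A. s v * bd n (Suc k) c (insert v \<rho>))"
      by (simp add: bd_eq[OF True] A_def s_def)
    also have "\<dots> = (\<Sum>v\<in>A. \<Sum>w\<in>A-{v}. F v w)"
      by (intro sum.cong refl) (simp add: inner F_def sum_distrib_left)
    also have "\<dots> = 0"
    proof (rule antisym_double_sum)
      show "finite A" by (simp add: A_def)
      fix v w assume "v \<in> A" "w \<in> A" "v \<noteq> w"
      then show "F w v = - F v w"
        by (cases "v < w") (auto simp: F_def insert_commute)
    qed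
    finally show ?thesis .
  qed
qed

lemma bd_lin: 
  assumes "finite I"
  shows "bd n k (\<lambda>\<sigma>. \<Sum>i\<in>I. a i * f i \<sigma>) \<tau> = (\<Sum>i\<in>I. a i * bd n k (f i) \<tau>)"
proof (cases "\<tau> \<subseteq> {1..n} \<and> card \<tau> + 1 = k")
  case True
  have "bd n k (\<lambda>\<sigma>. \<Sum>i\<in>I. a i * f i \<sigma>) \<tau> = (\<Sum>v\<in>{1..n} - \<tau>. \<Sum>i\<in>I. (-1) ^ card {x\<in>\<tau>. x < v} * (a i * f i (insert v \<tau>)))"
    by (simp add: bd_eq[OF True] sum_distrib_left)
  also have "\<dots> = (\<Sum>i\<in>I. \<Sum>v\<in>{1..n} - \<tau>. (-1) ^ card {x\<in>\<tau>. x < v} * (a i * f i (insert v \<tau>)))"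
    by (rule sum.swap)
  also have "\<dots> = (\<Sum>i\<in>I. a i * bd n k (f i) \<tau>)"
    by (simp add: bd_eq[OF True] sum_distrib_left mult_ac)
  finally show ?thesis .
next
  case False thus ?thesis by (simp add: bd_zero)
qed

lemma bd_add: "bd n k (\<lambda>\<sigma>. f \<sigma> + g \<sigma>) \<tau> = bd n k f \<tau> + bd n k g \<tau>"
  by (simp add: bd_def sum.distrib algebra_simps)

lemma bd_diff: "bd n k (\<lambda>\<sigma>. f \<sigma> - g \<sigma>) \<tau> = bd n k f \<tau> - bd n k g \<tau>"
  by (simp add: bd_def sum_subtractf algebra_simps)

lemma bd_neg: "bd n k (\<lambda>\<sigma>. - f \<sigma>) \<tau> = - bd n k f \<tau>"
  by (simp add: bd_def sum_negf)

theorem lemma5p1: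
  fixes n d m :: nat and Z :: "nat set \<Rightarrow> 'f::field" and D :: "nat set set"
  assumes "d \<ge> 1"
    and "simple_cycle n (d + 1) Z"
    and "D \<subseteq> supp Z"
    and "card (components (supp Z - D) (facet_adj d)) = m"
    and "m > 1"
  shows "\<exists>C :: nat \<Rightarrow> nat set \<Rightarrow> 'f.
     (\<forall>i<m. is_cycle n d (C i) \<and> supp (C i) \<subseteq> cplx D) \<and>
     (\<forall>i<m. \<forall>j<m. i \<noteq> j \<longrightarrow> supp (C i) \<inter> supp (C j) = {}) \<and>
     (\<forall>j<m. \<forall>a :: nat \<Rightarrow> 'f.
        (\<lambda>\<tau>. \<Sum>i\<in>{..<m} - {j}. a i * C i \<tau>) \<in> boundaries n (d + 1) (cplx D)
        \<longrightarrow> (\<forall>i\<in>{..<m} - {j}. a i = 0)) \<and>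
     (\<exists>a :: nat \<Rightarrow> 'f. (\<exists>i<m. a i \<noteq> 0) \<and>
        (\<lambda>\<tau>. \<Sum>i<m. a i * C i \<tau>) \<in> boundaries n (d + 1) (cplx D))"
proof -
  let ?S = "supp Z"
  have chZ: "is_chain n (d+1) Z" and bdZ: "bd n (d+1) Z = (\<lambda>_. 0)"
    and simpZ: "\<And>W. is_cycle n (d+1) W \<Longrightarrow> supp W \<subseteq> supp Z \<Longrightarrow> \<exists>a. W = (\<lambda>\<sigma>. a * Z \<sigma>)"
    using assms(2) by (auto simp: simple_cycle_def is_cycle_def)
  have S_sub: "\<sigma> \<subseteq> {1..n} \<and> card \<sigma> = d+1" if "\<sigma> \<in> ?S" for \<sigma>
    using chZ that by (auto simp: is_chain_def supp_def)
  have inS: "\<sigma> \<in> ?S \<longleftrightarrow> Z \<sigma> \<noteq> 0" for \<sigma> by (simp add: supp_def)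
  define V where "V = ?S - D"
  define R where "R = {(a,b). a\<in>V \<and> b\<in>V \<and> facet_adj d a b}"
  define comp where "comp x = {y\<in>V. (x,y)\<in>R\<^sup>*}" for x
  have comps_eq: "components (supp Z - D) (facet_adj d) = comp ` V"
    by (simp add: components_def comp_def R_def V_def)
  have symR: "sym R" unfolding sym_def R_def facet_adj_def by (auto simp: Int_commute)
  have symS: "(y,x)\<in>R\<^sup>*" if "(x,y)\<in>R\<^sup>*" for x y
    using sym_rtrancl[OF symR] that by (meson symD)
  have comp_same: "comp y = comp x" if "y \<in> comp x" for x y
  proof -
    have xy: "(x,y)\<in>R\<^sup>*" using that by (simp add: comp_def)
    show ?thesis unfolding comp_def
      using xy symS[OF xy] by (meson rtrancl_trans)
  qed
  have comp_closed: "z \<in> comp x" if "y \<in> comp x" "z \<in> V" "facet_adj d y z" for x y z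
    using that by (auto simp: comp_def R_def intro: rtrancl_into_rtrancl)
  have self_comp: "x \<in> comp x" if "x \<in> V" for x using that by (simp add: comp_def)
  have finC: "finite (comp ` V)" using assms(4,5) comps_eq by (metis card.infinite not_less_zero gr_implies_not0)
  obtain g where g: "bij_betw g {0..<m} (comp ` V)"
    using ex_bij_betw_nat_finite[OF finC] assms(4) comps_eq by auto
  have gi: "\<exists>x\<in>V. g i = comp x" if "i<m" for i
    using bij_betw_apply[OF g] that by auto
  have g_sub: "g i \<subseteq> V" if "i<m" for i using gi[OF that] by (auto simp: comp_def)
  have g_ne: "\<exists>\<sigma>. \<sigma> \<in> g i" if "i<m" for i using gi[OF that] self_comp by blast
  have g_cover: "\<exists>i<m. \<sigma> \<in> g i" if "\<sigma> \<in> V" for \<sigma>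
  proof -
    have "comp \<sigma> \<in> g ` {0..<m}" using g that bij_betw_imp_surj_on by blast
    then show ?thesis using self_comp[OF that] by auto
  qed
  have g_disj: "i = j" if ij: "i<m" "j<m" "\<sigma> \<in> g i" "\<sigma> \<in> g j" for i j \<sigma>
  proof -
    obtain x where x: "g i = comp x" using gi[OF ij(1)] by blast
    then have 1: "g i = comp \<sigma>" using comp_same ij(3) by metis
    obtain y where "g j = comp y" using gi[OF ij(2)] by blast
    then have "g j = comp \<sigma>" using comp_same ij(4) by metis
    with 1 show ?thesis using g ij(1,2) unfolding bij_betw_def inj_on_def by auto
  qed
  have g_adj: "\<tau> \<in> g i" if "i<m" "\<sigma> \<in> g i" "\<tau> \<in> V" "facet_adj d \<sigma> \<tau>" for i \<sigma> \<tau>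
    using gi[OF that(1)] comp_closed that by blast
  define Zc where "Zc i \<sigma> = (if \<sigma> \<in> g i then Z \<sigma> else 0)" for i \<sigma>
  define C where "C i = bd n (d+1) (Zc i)" for i
  have VS: "\<sigma> \<in> V \<Longrightarrow> Z \<sigma> \<noteq> 0 \<and> \<sigma> \<notin> D" for \<sigma> by (auto simp: V_def supp_def)
  have L0: "\<tau> \<subseteq> {1..n} \<and> card \<tau> = d \<and> (\<exists>v\<in>{1..n}-\<tau>. insert v \<tau> \<in> g i)" if "C i \<tau> \<noteq> 0" for i \<tau>
  proof -
    have cond: "\<tau> \<subseteq> {1..n} \<and> card \<tau> + 1 = d + 1"
      using that bd_zero unfolding C_def by blast
    have "(\<Sum>v\<in>{1..n} - \<tau>. (-1) ^ card {x\<in>\<tau>. x < v} * Zc i (insert v \<tau>)) \<noteq> 0"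
      using that unfolding C_def bd_eq[OF cond] .
    then obtain v where "v \<in> {1..n} - \<tau>" "(-1) ^ card {x\<in>\<tau>. x < v} * Zc i (insert v \<tau>) \<noteq> 0"
      by (meson sum.not_neutral_contains_not_neutral)
    then show ?thesis using cond by (auto simp: Zc_def split: if_splits)
  qed
  have L1: "insert w \<tau> \<notin> g j"
    if h: "i<m" "j<m" "i\<noteq>j" "finite \<tau>" "card \<tau> = d" "v\<notin>\<tau>" "insert v \<tau> \<in> g i" "w\<notin>\<tau>" for i j \<tau> v w
  proof
    assume wj: "insert w \<tau> \<in> g j"
    show False
    proof (cases "v = w")
      case True then show False using g_disj h wj by blast
    next
      case False
      have "insert v \<tau> \<inter> insert w \<tau> = \<tau>" using False h by auto
      then have "facet_adj d (insert v \<tau>) (insert w \<tau>)" using False h unfolding facet_adj_def by auto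
      moreover have "insert w \<tau> \<in> V" using g_sub[OF h(2)] wj by blast
      ultimately have "insert w \<tau> \<in> g i" using g_adj h by blast
      then show False using g_disj h wj by blast
    qed
  qed
  have L2: "C j \<tau> = 0" if "i<m" "j<m" "i\<noteq>j" "C i \<tau> \<noteq> 0" for i j \<tau>
  proof (rule ccontr)
    assume "C j \<tau> \<noteq> 0"
    from L0[OF this] obtain w where w: "w\<in>{1..n}-\<tau>" "insert w \<tau> \<in> g j" by blast
    from L0[OF that(4)] obtain v where v: "\<tau> \<subseteq> {1..n}" "card \<tau> = d" "v\<in>{1..n}-\<tau>" "insert v \<tau> \<in> g i" by blast
    have "finite \<tau>" using v(1) finite_subset by blast
    then show False using L1[OF that(1-3) _ v(2) _ v(4), of w] v w by blast
  qed
  have L3: "\<tau> \<in> cplx D" if "C i \<tau> \<noteq> 0" "i<m" for i \<tau>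
  proof (rule ccontr)
    assume nD: "\<tau> \<notin> cplx D"
    from L0[OF that(1)] obtain v where v: "\<tau> \<subseteq> {1..n}" "card \<tau> = d" "v\<in>{1..n}-\<tau>" "insert v \<tau> \<in> g i" by blast
    have fin: "finite \<tau>" using v(1) finite_subset by blast
    have cond: "\<tau> \<subseteq> {1..n} \<and> card \<tau> + 1 = d + 1" using v by simp
    have "C i \<tau> = bd n (d+1) Z \<tau>"
      unfolding C_def bd_eq[OF cond]
    proof (rule sum.cong[OF refl])
      fix w assume w: "w \<in> {1..n} - \<tau>"
      have "Zc i (insert w \<tau>) = Z (insert w \<tau>)"
      proof (cases "insert w \<tau> \<in> g i")
        case True then show ?thesis by (simp add: Zc_def)
      next
        case False
        have "Z (insert w \<tau>) = 0"
        proof (rule ccontr)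
          assume "Z (insert w \<tau>) \<noteq> 0"
          moreover have "insert w \<tau> \<notin> D" using nD unfolding cplx_def by blast
          ultimately have "insert w \<tau> \<in> V" by (simp add: V_def supp_def)
          then obtain j where j: "j<m" "insert w \<tau> \<in> g j" using g_cover by blast
          then have "i \<noteq> j" using False by blast
          then show False using L1[OF that(2) j(1) _ fin v(2) _ v(4), of w] v w j by blast
        qed
        then show ?thesis using False by (simp add: Zc_def)
      qed
      then show "(-1) ^ card {x\<in>\<tau>. x < w} * Zc i (insert w \<tau>) = (-1) ^ card {x\<in>\<tau>. x < w} * Z (insert w \<tau>)"
        by simp
    qed
    then show False using that(1) bdZ by simp
  qed
  have cyc: "is_cycle n d (C i)" for i
  proof -
    have "is_chain n d (C i)" unfolding is_chain_def using L0 by blast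
    moreover have "bd n d (C i) = (\<lambda>_. 0)" unfolding C_def using bd_dd by simp
    ultimately show ?thesis by (simp add: is_cycle_def)
  qed
  define ZD where "ZD \<sigma> = (if \<sigma> \<in> D then Z \<sigma> else 0)" for \<sigma>
  have Dec: "Z = (\<lambda>\<sigma>. ZD \<sigma> + (\<Sum>i<m. 1 * Zc i \<sigma>))"
  proof
    fix \<sigma>
    show "Z \<sigma> = ZD \<sigma> + (\<Sum>i<m. 1 * Zc i \<sigma>)"
    proof (cases "\<sigma> \<in> V")
      case True
      then obtain i0 where i0: "i0<m" "\<sigma> \<in> g i0" using g_cover by blast
      have "(\<Sum>i<m. 1 * Zc i \<sigma>) = (\<Sum>i<m. if i = i0 then Z \<sigma> else 0)"
        by (rule sum.cong[OF refl]) (use g_disj i0 in \<open>auto simp: Zc_def\<close>)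
      also have "\<dots> = Z \<sigma>" using i0 by simp
      finally show ?thesis using VS[OF True] by (simp add: ZD_def)
    next
      case False
      then have "Zc i \<sigma> = 0" if "i<m" for i using g_sub[OF that] by (auto simp: Zc_def)
      then have "(\<Sum>i<m. 1 * Zc i \<sigma>) = 0" by simp
      moreover have "Z \<sigma> = ZD \<sigma>" using False by (auto simp: ZD_def V_def supp_def)
      ultimately show ?thesis by simp
    qed
  qed
  have bdsum: "bd n (d+1) ZD \<tau> + (\<Sum>i<m. C i \<tau>) = 0" for \<tau>
  proof -
    have "0 = bd n (d+1) Z \<tau>" using bdZ by simp
    also have "\<dots> = bd n (d+1) (\<lambda>\<sigma>. ZD \<sigma> + (\<Sum>i<m. 1 * Zc i \<sigma>)) \<tau>" using Dec by metis
    also have "\<dots> = bd n (d+1) ZD \<tau> + (\<Sum>i<m. C i \<tau>)"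
      by (simp only: bd_add bd_lin[OF finite_lessThan] C_def) simp
    finally show ?thesis by simp
  qed
  have dep: "\<exists>a :: nat \<Rightarrow> 'f. (\<exists>i<m. a i \<noteq> 0) \<and>
        (\<lambda>\<tau>. \<Sum>i<m. a i * C i \<tau>) \<in> boundaries n (d + 1) (cplx D)"
  proof (rule exI[of _ "\<lambda>_. 1"], intro conjI)
    show "\<exists>i<m. (\<lambda>_. 1::'f) i \<noteq> 0" using assms(5) by auto
    define B where "B \<sigma> = - ZD \<sigma>" for \<sigma>
    have "is_chain n (d+1) B" unfolding is_chain_def B_def ZD_def using S_sub assms(3) by (auto simp: supp_def)
    moreover have "supp B \<subseteq> cplx D" unfolding supp_def B_def ZD_def cplx_def by auto
    moreover have "(\<lambda>\<tau>. \<Sum>i<m. (\<lambda>_. 1::'f) i * C i \<tau>) = bd n (d+1) B"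
    proof
      fix \<tau> show "(\<Sum>i<m. (\<lambda>_. 1::'f) i * C i \<tau>) = bd n (d+1) B \<tau>"
        unfolding B_def bd_neg using bdsum[of \<tau>] by (simp add: eq_neg_iff_add_eq_0 add.commute)
    qed
    ultimately show "(\<lambda>\<tau>. \<Sum>i<m. (\<lambda>_. 1::'f) i * C i \<tau>) \<in> boundaries n (d + 1) (cplx D)"
      unfolding boundaries_def by blast
  qed
  have indep: "\<forall>i\<in>{..<m} - {j}. a i = 0"
    if j: "j<m" and hb: "(\<lambda>\<tau>. \<Sum>i\<in>{..<m} - {j}. a i * C i \<tau>) \<in> boundaries n (d + 1) (cplx D)" for j a
  proof -
    define I where "I = {..<m} - {j}"
    have finI: "finite I" by (simp add: I_def)
    obtain B where eq: "(\<lambda>\<tau>. \<Sum>i\<in>I. a i * C i \<tau>) = bd n (d+1) B"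
      and chB: "is_chain n (d+1) B" and sB: "supp B \<subseteq> cplx D"
      using hb unfolding boundaries_def I_def by blast
    have BD: "\<sigma> \<in> D" if "B \<sigma> \<noteq> 0" for \<sigma>
    proof -
      have "\<sigma> \<in> cplx D" using sB that by (auto simp: supp_def)
      then obtain \<delta> where \<delta>: "\<delta> \<in> D" "\<sigma> \<subseteq> \<delta>" unfolding cplx_def by blast
      have "card \<sigma> = d+1" using chB that by (auto simp: is_chain_def)
      moreover have "card \<delta> = d+1" "finite \<delta>" using S_sub[of \<delta>] \<delta>(1) assms(3) finite_subset by auto
      ultimately have "\<sigma> = \<delta>" using \<delta>(2) card_subset_eq by metis
      then show ?thesis using \<delta> by simp
    qed
    define W where "W \<sigma> = (\<Sum>i\<in>I. a i * Zc i \<sigma>) - B \<sigma>" for \<sigma>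
    have bdW: "bd n (d+1) W = (\<lambda>_. 0)"
    proof
      fix \<tau>
      have "bd n (d+1) W \<tau> = (\<Sum>i\<in>I. a i * C i \<tau>) - bd n (d+1) B \<tau>"
        unfolding W_def bd_diff bd_lin[OF finI] C_def by simp
      also have "\<dots> = 0" using fun_cong[OF eq, of \<tau>] by simp
      finally show "bd n (d+1) W \<tau> = 0" .
    qed
    have Wnz: "Z \<sigma> \<noteq> 0" if "W \<sigma> \<noteq> 0" for \<sigma>
    proof (cases "B \<sigma> = 0")
      case True
      then have "(\<Sum>i\<in>I. a i * Zc i \<sigma>) \<noteq> 0" using that by (simp add: W_def)
      then obtain i where "a i * Zc i \<sigma> \<noteq> 0" by (meson sum.not_neutral_contains_not_neutral)
      then show ?thesis by (auto simp: Zc_def split: if_splits)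
    next
      case False then show ?thesis using BD assms(3) by (auto simp: supp_def)
    qed
    have "is_cycle n (d+1) W" unfolding is_cycle_def is_chain_def
      using bdW Wnz S_sub by (auto simp: supp_def)
    moreover have "supp W \<subseteq> supp Z" using Wnz by (auto simp: supp_def)
    ultimately obtain c where c: "W = (\<lambda>\<sigma>. c * Z \<sigma>)" using simpZ by blast
    have Wg: "W \<sigma> = (if i0 \<in> I then a i0 * Z \<sigma> else 0)" if "i0<m" "\<sigma> \<in> g i0" for i0 \<sigma>
    proof -
      have "\<sigma> \<in> V" using g_sub that by blast
      then have B0: "B \<sigma> = 0" using BD VS by blast
      have "(\<Sum>i\<in>I. a i * Zc i \<sigma>) = (\<Sum>i\<in>I. if i = i0 then a i0 * Z \<sigma> else 0)"
        by (rule sum.cong[OF refl]) (use g_disj that in \<open>auto simp: Zc_def I_def\<close>)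
      also have "\<dots> = (if i0 \<in> I then a i0 * Z \<sigma> else 0)" using finI by simp
      finally show ?thesis by (simp add: W_def B0)
    qed
    obtain \<sigma>0 where s0: "\<sigma>0 \<in> g j" using g_ne[OF j] by blast
    have "j \<notin> I" by (simp add: I_def)
    then have "c * Z \<sigma>0 = 0" using Wg[OF j s0] c by metis
    moreover have "Z \<sigma>0 \<noteq> 0" using VS g_sub[OF j] s0 by blast
    ultimately have c0: "c = 0" by simp
    show ?thesis
    proof
      fix i assume iI: "i \<in> {..<m} - {j}"
      then have im: "i<m" by simp
      obtain \<sigma> where s: "\<sigma> \<in> g i" using g_ne[OF im] by blast
      have "a i * Z \<sigma> = 0" using Wg[OF im s] c c0 iI unfolding I_def by (metis mult_zero_left)
      moreover have "Z \<sigma> \<noteq> 0" using VS g_sub[OF im] s by blast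
      ultimately show "a i = 0" by simp
    qed
  qed
  show ?thesis
  proof (rule exI[of _ C], intro conjI)
    show "\<forall>i<m. is_cycle n d (C i) \<and> supp (C i) \<subseteq> cplx D"
      using cyc L3 by (auto simp: supp_def)
    show "\<forall>i<m. \<forall>j<m. i \<noteq> j \<longrightarrow> supp (C i) \<inter> supp (C j) = {}"
      using L2 by (auto simp: supp_def)
    show "\<forall>j<m. \<forall>a :: nat \<Rightarrow> 'f.
        (\<lambda>\<tau>. \<Sum>i\<in>{..<m} - {j}. a i * C i \<tau>) \<in> boundaries n (d + 1) (cplx D)
        \<longrightarrow> (\<forall>i\<in>{..<m} - {j}. a i = 0)" using indep by blast
    show "\<exists>a :: nat \<Rightarrow> 'f. (\<exists>i<m. a i \<noteq> 0) \<and>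
        (\<lambda>\<tau>. \<Sum>i<m. a i * C i \<tau>) \<in> boundaries n (d + 1) (cplx D)" by (rule dep)
  qed
qed
end
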